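(* Let $b>0$, $k>0$, $c>1$ and $E\in(0,1)$. Define $$m_{SN}=\frac{-E^2k^2+2Eck-2Ek+c-1}{E^2(E^2k^2+2Ek+1)},$$ $$a_1=\frac{E^4k^2-2E^3k^2+2E^3k+3E^2ck+E^2k^2-4E^2k-2Eck+E^2+2Ec+2Ek-2E-c+1}{cE^2(E^2k^2+2Ek+1)},$$ and assume $a_1>0$, $m_{SN}>0$. Consider, with $a=a_1$ and bifurcation parameter $m>0$, the system $$\frac{dx}{dt}=bx(1-x-cy),\qquad \frac{dy}{dt}=y\Big(\frac{1}{1+kx}-y-ax-mxy\Big),$$ for which, at $m=m_{SN}$, $E_{3*}=(E,(1-E)/c)$ is a positive equilibrium. Suppose that at $m=m_{SN}$ one has $m>m_1:=1-ac-k$ and $0<k<\frac1a-1$, and that $c\ne\frac{E^3k^3+3E^2k^2+3Ek+1}{3E^2k^2+3Ek+1}$. Then the system undergoes a saddle-node bifurcation around $E_{3*}$ at the bifurcation parameter threshold $m=m_{SN}$.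
   Context: The values $m_{SN}$ and $a_1$ are exactly those for which $E$ is a double root of the cubic $u(x)=kmx^3+((-ac-m+1)k+m)x^2+(-ac-k-m+1)x+c-1$, i.e. $u(E)=u'(E)=0$; roots of $u$ in $(0,1)$ are the $x$-coordinates of positive equilibria $(x,(1-x)/c)$. *)

theory Defs
  imports "HOL-Analysis.Analysis"
begin

definition m_SN :: "real \<Rightarrow> real \<Rightarrow> real \<Rightarrow> real" where
  "m_SN k c Ee =
     (- (Ee^2 * k^2) + 2 * Ee * c * k - 2 * Ee * k + c - 1) /
     (Ee^2 * (Ee^2 * k^2 + 2 * Ee * k + 1))"

definition a_1 :: "real \<Rightarrow> real \<Rightarrow> real \<Rightarrow> real" where
  "a_1 k c Ee =
     (Ee^4 * k^2 - 2 * Ee^3 * k^2 + 2 * Ee^3 * k + 3 * Ee^2 * c * k + Ee^2 * k^2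
      - 4 * Ee^2 * k - 2 * Ee * c * k + Ee^2 + 2 * Ee * c + 2 * Ee * k - 2 * Ee - c + 1) /
     (c * Ee^2 * (Ee^2 * k^2 + 2 * Ee * k + 1))"

definition vfield :: "real \<Rightarrow> real \<Rightarrow> real \<Rightarrow> real \<Rightarrow> real \<Rightarrow> real \<times> real \<Rightarrow> real \<times> real" where
  "vfield b c k a m p =
     (let x = fst p; y = snd p in
       (b * x * (1 - x - c * y), y * (1 / (1 + k * x) - y - a * x - m * x * y)))"

text \<open>Saddle-node (fold) bifurcation of the family of planar vector fields F m at the
  equilibrium p0 and parameter value m0:
  (i) p0 is an equilibrium of F m0 whose linearization D has 0 as a simple eigenvalue
      (D singular, but D is not nilpotent, i.e. D o D is not the zero map);
  (ii) locally, p0 is the only equilibrium of F m0, and for every sufficiently small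
      neighbourhood ball p0 delta, on one side of m0 (direction sigma) there are exactly two
      equilibria in that neighbourhood and on the other side there are none
      (two equilibria collide at p0 and disappear).\<close>

definition saddle_node_bifurcation ::
  "(real \<Rightarrow> real \<times> real \<Rightarrow> real \<times> real) \<Rightarrow> real \<Rightarrow> real \<times> real \<Rightarrow> bool" where
  "saddle_node_bifurcation F m0 p0 \<longleftrightarrow>
     F m0 p0 = 0 \<and>
     (\<exists>D. (F m0 has_derivative D) (at p0) \<and> (\<exists>v. v \<noteq> 0 \<and> D v = 0) \<and> (\<exists>w. D (D w) \<noteq> 0)) \<and>
     (\<exists>\<delta>0>0. (\<forall>p\<in>ball p0 \<delta>0. F m0 p = 0 \<longrightarrow> p = p0) \<and>
        (\<exists>\<sigma>\<in>{-1, 1::real}. \<forall>\<delta>. 0 < \<delta> \<and> \<delta> \<le> \<delta>0 \<longrightarrow>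
           (\<exists>\<epsilon>>0. \<forall>m.
              (0 < \<sigma> * (m - m0) \<and> \<sigma> * (m - m0) < \<epsilon> \<longrightarrow>
                 (\<exists>p q. p \<noteq> q \<and> {z \<in> ball p0 \<delta>. F m z = 0} = {p, q})) \<and>
              (0 < \<sigma> * (m0 - m) \<and> \<sigma> * (m0 - m) < \<epsilon> \<longrightarrow>
                 {z \<in> ball p0 \<delta>. F m z = 0} = {}))))"

end

theory Submission
  imports Defs
begin

lemma oneD:
  fixes \<phi> :: "real \<Rightarrow> real" and E \<eta> \<rho> :: real
  assumes eta: "0 < \<rho>" "\<rho> \<le> \<eta>"
    and cont: "continuous_on {E-\<eta>..E+\<eta>} \<phi>"
    and dec: "\<And>x y. E-\<eta> \<le> x \<Longrightarrow> x < y \<Longrightarrow> y \<le> E \<Longrightarrow> \<phi> y < \<phi> x"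
    and inc: "\<And>x y. E \<le> x \<Longrightarrow> x < y \<Longrightarrow> y \<le> E+\<eta> \<Longrightarrow> \<phi> x < \<phi> y"
    and z: "\<phi> E = 0"
  shows "\<exists>\<epsilon>>0. \<forall>\<nu>. (0 < \<nu> \<and> \<nu> < \<epsilon> \<longrightarrow> (\<exists>p q. p \<noteq> q \<and> {x. \<bar>x-E\<bar> < \<rho> \<and> \<phi> x = \<nu>} = {p,q}))
        \<and> (\<nu> < 0 \<longrightarrow> {x. \<bar>x-E\<bar> < \<rho> \<and> \<phi> x = \<nu>} = {})"
proof -
  have pos: "\<phi> x > 0" if "\<bar>x-E\<bar> \<le> \<eta>" "x \<noteq> E" for x
  proof (cases "x < E")
    case True then show ?thesis using dec[of x E] that z by auto
  next
    case False then show ?thesis using inc[of E x] that z by auto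
  qed
  define \<epsilon> where "\<epsilon> = min (\<phi> (E-\<rho>)) (\<phi> (E+\<rho>))"
  have e1: "\<phi> (E-\<rho>) > 0" "\<phi> (E+\<rho>) > 0" using pos eta by auto
  have "\<epsilon> > 0" using e1 by (simp add: \<epsilon>_def)
  moreover have "(0 < \<nu> \<and> \<nu> < \<epsilon> \<longrightarrow> (\<exists>p q. p \<noteq> q \<and> {x. \<bar>x-E\<bar> < \<rho> \<and> \<phi> x = \<nu>} = {p,q}))
        \<and> (\<nu> < 0 \<longrightarrow> {x. \<bar>x-E\<bar> < \<rho> \<and> \<phi> x = \<nu>} = {})" for \<nu>
  proof (intro conjI impI)
    assume "\<nu> < 0"
    then show "{x. \<bar>x-E\<bar> < \<rho> \<and> \<phi> x = \<nu>} = {}" using pos z eta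
      by (smt (verit) empty_Collect_eq)
  next
    assume nu: "0 < \<nu> \<and> \<nu> < \<epsilon>"
    have c1: "continuous_on {E-\<rho>..E} \<phi>" by (rule continuous_on_subset[OF cont]) (use eta in auto)
    have c2: "continuous_on {E..E+\<rho>} \<phi>" by (rule continuous_on_subset[OF cont]) (use eta in auto)
    obtain p where p: "E-\<rho> \<le> p" "p \<le> E" "\<phi> p = \<nu>"
      using IVT2'[of \<phi> E \<nu> "E-\<rho>", OF _ _ _ c1] nu z eta unfolding \<epsilon>_def by auto
    obtain q where q: "E \<le> q" "q \<le> E+\<rho>" "\<phi> q = \<nu>"
      using IVT'[of \<phi> E \<nu> "E+\<rho>", OF _ _ _ c2] nu z eta unfolding \<epsilon>_def by auto
    have pl: "E-\<rho> < p" "p < E" using p nu z unfolding \<epsilon>_def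
      by (smt (verit, best))+
    have ql: "q < E+\<rho>" "E < q" using q nu z unfolding \<epsilon>_def by (smt (verit, best))+
    have "{x. \<bar>x-E\<bar> < \<rho> \<and> \<phi> x = \<nu>} = {p,q}"
    proof (intro set_eqI iffI)
      fix x assume x: "x \<in> {x. \<bar>x-E\<bar> < \<rho> \<and> \<phi> x = \<nu>}"
      then have "x \<noteq> E" using z nu by auto
      show "x \<in> {p,q}"
      proof (cases "x < E")
        case True
        then have "x = p" using dec[of x p] dec[of p x] x pl eta p by (smt (verit) mem_Collect_eq)
        then show ?thesis by simp
      next
        case False
        then have "x = q" using inc[of x q] inc[of q x] x ql eta q \<open>x \<noteq> E\<close> by (smt (verit) mem_Collect_eq)
        then show ?thesis by simp
      qed
    next
      fix x assume "x \<in> {p,q}"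
      then show "x \<in> {x. \<bar>x-E\<bar> < \<rho> \<and> \<phi> x = \<nu>}" using pl ql p q by auto
    qed
    moreover have "p \<noteq> q" using pl ql by auto
    ultimately show "\<exists>p q. p \<noteq> q \<and> {x. \<bar>x-E\<bar> < \<rho> \<and> \<phi> x = \<nu>} = {p,q}" by blast
  qed
  ultimately show ?thesis by blast
qed

lemma key:
  fixes k c E x m :: real
  assumes "E > 0" "k > 0" "c > 1" "1 + k*x \<noteq> 0"
  shows "c*(1+k*x) * (1/(1+k*x) - (1-x)/c - a_1 k c E * x - m*x*((1-x)/c))
     = (x-E)^2 * (k*m_SN k c E*x + (c-1)/E^2) - (m - m_SN k c E) * (x*(1-x)*(1+k*x))"
proof -
  define D where "D = E^2 * k^2 + 2 * E * k + 1"
  define A where "A = (E^4 * k^2 - 2 * E^3 * k^2 + 2 * E^3 * k + 3 * E^2 * c * k + E^2 * k^2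
      - 4 * E^2 * k - 2 * E * c * k + E^2 + 2 * E * c + 2 * E * k - 2 * E - c + 1)"
  define M where "M = (- (E^2 * k^2) + 2 * E * c * k - 2 * E * k + c - 1)"
  have d: "D \<noteq> 0" using assms unfolding D_def by (smt (verit) mult_pos_pos zero_less_power)
  have c0: "c \<noteq> 0" "E \<noteq> 0" using assms by auto
  have a: "a_1 k c E = A/(c*E^2*D)" unfolding a_1_def A_def D_def ..
  have m: "m_SN k c E = M/(E^2*D)" unfolding m_SN_def M_def D_def ..
  have s1: "c*(1+k*x) * (1/(1+k*x) - (1-x)/c - a_1 k c E * x - m*x*((1-x)/c))
     = c - (1-x)*(1+k*x) - c*a_1 k c E*x*(1+k*x) - m*x*(1-x)*(1+k*x)"
  proof -
    have "c*(1+k*x) * (1/(1+k*x) - ((1-x)/c + a_1 k c E * x + m*x*((1-x)/c)))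
       = c*((1+k*x)/(1+k*x)) - c*(1+k*x)*((1-x)/c + a_1 k c E * x + m*x*((1-x)/c))"
      by (simp only: right_diff_distrib times_divide_eq_right mult_1_right)
    also have "\<dots> = c - (1-x)*(1+k*x) - c*a_1 k c E*x*(1+k*x) - m*x*(1-x)*(1+k*x)"
      using c0 by (subst divide_self[OF assms(4)]) (simp add: field_simps)
    finally show ?thesis by (simp add: algebra_simps)
  qed
  have p: "E^2*D*(c - (1-x)*(1+k*x)) - A*x*(1+k*x) - m*E^2*D*x*(1-x)*(1+k*x)
     = (x-E)^2 * (k*M*x + (c-1)*D) - (m*E^2*D - M) * (x*(1-x)*(1+k*x))"
    unfolding A_def M_def D_def by (simp add: algebra_simps power2_eq_square power3_eq_cube power4_eq_xxxx)
  have l: "c - (1-x)*(1+k*x) - c*(A/(c*E^2*D))*x*(1+k*x) - m*x*(1-x)*(1+k*x)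
     = (E^2*D*(c - (1-x)*(1+k*x)) - A*x*(1+k*x) - m*E^2*D*x*(1-x)*(1+k*x))/(E^2*D)"
    using d c0 by (simp add: field_simps)
  have r: "(x-E)^2 * (k*(M/(E^2*D))*x + (c-1)/E^2) - (m - M/(E^2*D)) * (x*(1-x)*(1+k*x))
     = ((x-E)^2 * (k*M*x + (c-1)*D) - (m*E^2*D - M) * (x*(1-x)*(1+k*x)))/(E^2*D)"
    using d c0 by (simp add: field_simps)
  show ?thesis unfolding s1 unfolding a m l r p ..
qed

lemma Lne:
  fixes k c E :: real
  assumes "E > 0" "k > 0" "c > 1"
    and "c \<noteq> (E^3 * k^3 + 3 * E^2 * k^2 + 3 * E * k + 1) / (3 * E^2 * k^2 + 3 * E * k + 1)"
  shows "k*m_SN k c E*E + (c-1)/E^2 \<noteq> 0"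
proof -
  define D where "D = E^2 * k^2 + 2 * E * k + 1"
  define M where "M = (- (E^2 * k^2) + 2 * E * c * k - 2 * E * k + c - 1)"
  have d: "D \<noteq> 0" using assms unfolding D_def by (smt (verit) mult_pos_pos zero_less_power)
  have t: "3 * E^2 * k^2 + 3 * E * k + 1 > 0" using assms by (smt (verit) mult_pos_pos zero_less_power)
  have c0: "c \<noteq> 0" "E \<noteq> 0" using assms by auto
  have m: "m_SN k c E = M/(E^2*D)" unfolding m_SN_def M_def D_def ..
  have "k*m_SN k c E*E + (c-1)/E^2 = (k*M*E + (c-1)*D)/(E^2*D)"
    unfolding m using d c0 by (simp add: field_simps power2_eq_square)
  also have "k*M*E + (c-1)*D = c*(3 * E^2 * k^2 + 3 * E * k + 1) - (E^3 * k^3 + 3 * E^2 * k^2 + 3 * E * k + 1)"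
    unfolding M_def D_def by (simp add: algebra_simps power2_eq_square power3_eq_cube)
  finally have e: "k*m_SN k c E*E + (c-1)/E^2 = (c*(3 * E^2 * k^2 + 3 * E * k + 1) - (E^3 * k^3 + 3 * E^2 * k^2 + 3 * E * k + 1))/(E^2*D)" .
  have "c*(3 * E^2 * k^2 + 3 * E * k + 1) \<noteq> (E^3 * k^3 + 3 * E^2 * k^2 + 3 * E * k + 1)"
    using assms(4) t by (auto simp: field_simps)
  then show ?thesis unfolding e using d c0 by simp
qed

lemma vder:
  fixes b c k a m E y0 :: real
  assumes "1 + k*E \<noteq> 0" "1 - E - c*y0 = 0" "1/(1+k*E) - y0 - a*E - m*E*y0 = 0"
  shows "(vfield b c k a m has_derivative
     (\<lambda>h. (-b*E*fst h - b*c*E* snd h,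
           y0*(-k/(1+k*E)^2 - a - m*y0)*fst h - y0*(1+m*E)* snd h))) (at (E,y0))"
proof -
  have g: "1/(1+k*E) - y0 - a*E - m*E*y0 = 0 \<Longrightarrow> True" by simp
  have f: "vfield b c k a m = (\<lambda>p. (b*fst p*(1-fst p-c* snd p), snd p*(1/(1+k*fst p) - snd p - a*fst p - m*fst p* snd p)))"
    by (rule ext) (simp add: vfield_def Let_def)
  show ?thesis unfolding f
    apply (rule has_derivative_Pair)
     apply (auto intro!: derivative_eq_intros simp: assms)
    apply (rule ext, simp add: algebra_simps)
    apply (rule ext, simp add: algebra_simps power2_eq_square)
    done qed

lemma gx_lemma:
  fixes k c E :: real
  assumes "E > 0" "k > 0" "c > 1"
  shows "c*(-k/(1+k*E)^2 - a_1 k c E - m_SN k c E*((1-E)/c)) + 1 + m_SN k c E*E = 0"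
proof -
  define D where "D = E^2 * k^2 + 2 * E * k + 1"
  define A where "A = (E^4 * k^2 - 2 * E^3 * k^2 + 2 * E^3 * k + 3 * E^2 * c * k + E^2 * k^2
      - 4 * E^2 * k - 2 * E * c * k + E^2 + 2 * E * c + 2 * E * k - 2 * E - c + 1)"
  define M where "M = (- (E^2 * k^2) + 2 * E * c * k - 2 * E * k + c - 1)"
  have d: "D \<noteq> 0" using assms unfolding D_def by (smt (verit) mult_pos_pos zero_less_power)
  have e: "(1+k*E)^2 = D" by (simp add: D_def power2_eq_square algebra_simps)
  have c0: "c \<noteq> 0" "E \<noteq> 0" using assms by auto
  have a: "a_1 k c E = A/(c*E^2*D)" unfolding a_1_def A_def D_def ..
  have m: "m_SN k c E = M/(E^2*D)" unfolding m_SN_def M_def D_def ..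
  have p: "-c*k*E^2 - A - M*(1-E) + E^2*D + M*E = 0"
    unfolding A_def M_def D_def by (simp add: algebra_simps power2_eq_square power3_eq_cube power4_eq_xxxx)
  have "c*(-k/(1+k*E)^2 - a_1 k c E - m_SN k c E*((1-E)/c)) + 1 + m_SN k c E*E
     = (-c*k*E^2 - A - M*(1-E) + E^2*D + M*E) / (E^2*D)"
    unfolding a m e using d c0 by (simp add: field_simps)
  then show ?thesis using p by simp
qed

theorem theorem10:
  fixes b k c Ee :: real
  assumes "b > 0" and "k > 0" and "c > 1" and "0 < Ee" and "Ee < 1"
    and "a_1 k c Ee > 0" and "m_SN k c Ee > 0"
    and "m_SN k c Ee > 1 - a_1 k c Ee * c - k"
    and "k < 1 / a_1 k c Ee - 1"
    and "c \<noteq> (Ee^3 * k^3 + 3 * Ee^2 * k^2 + 3 * Ee * k + 1) / (3 * Ee^2 * k^2 + 3 * Ee * k + 1)"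
  shows "saddle_node_bifurcation (\<lambda>m. vfield b c k (a_1 k c Ee) m) (m_SN k c Ee) (Ee, (1 - Ee) / c)"
proof -
  define E where "E = Ee"
  define a where "a = a_1 k c Ee"
  define m0 where "m0 = m_SN k c Ee"
  define y0 where "y0 = (1 - E) / c"
  have E0: "0 < E" "E < 1" using assms unfolding E_def by auto
  have kc: "k > 0" "c > 1" using assms by auto
  have m0p: "m0 > 0" using assms unfolding m0_def by auto
  have y0p: "y0 > 0" using E0 kc unfolding y0_def by auto
  define L where "L = (\<lambda>x::real. k*m0*x + (c-1)/E^2)"
  define Q where "Q = (\<lambda>x::real. x*(1-x)*(1+k*x))"
  define Q' where "Q' = (\<lambda>x::real. (1-2*x)*(1+k*x) + k*x*(1-x))"
  define \<sigma> where "\<sigma> = sgn (L E)"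
  have LE: "L E \<noteq> 0" using Lne[OF assms(4,2,3,10)] unfolding L_def m0_def E_def by simp
  have sig: "\<sigma> \<in> {-1, 1}" "\<sigma>*\<sigma> = 1" "\<sigma> * L E > 0" "\<sigma> \<noteq> 0"
    using LE unfolding \<sigma>_def by (auto simp: sgn_if)
  define \<phi> where "\<phi> = (\<lambda>x. \<sigma> * ((x-E)^2 * (L x / Q x)))"
  define G where "G = (\<lambda>x. \<sigma> * (2 * (L x / Q x) + (x-E) * ((k*m0*Q x - L x*Q' x)/(Q x * Q x))))"
  have QE: "Q E > 0" using E0 kc unfolding Q_def by (simp add: mult_pos_pos add_pos_pos)
  have Qpos: "Q x > 0" if "0 < x" "x < 1" for x using that kc unfolding Q_def by (simp add: mult_pos_pos add_pos_pos)
  have dphi: "DERIV \<phi> x :> (x-E) * G x" if "Q x \<noteq> 0" for x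
  proof -
    have dL: "DERIV L x :> k*m0" unfolding L_def by (auto intro!: derivative_eq_intros)
    have dQ: "DERIV Q x :> Q' x" unfolding Q_def Q'_def by (auto intro!: derivative_eq_intros simp: algebra_simps)
    have dR: "DERIV (\<lambda>x. L x / Q x) x :> (k*m0*Q x - L x*Q' x)/(Q x * Q x)"
      using DERIV_divide[OF dL dQ that] by simp
    have dS: "DERIV (\<lambda>x. (x-E)^2) x :> 2*(x-E)" by (auto intro!: derivative_eq_intros)
    have "DERIV (\<lambda>x. \<sigma> * ((x-E)^2 * (L x / Q x))) x :> \<sigma> * (2*(x-E) * (L x / Q x) + (k*m0*Q x - L x*Q' x)/(Q x * Q x) * (x-E)^2)"
      by (intro DERIV_cmult DERIV_mult dS dR)
    then show ?thesis unfolding \<phi>_def G_def by (rule DERIV_cong) (simp add: algebra_simps power2_eq_square add_divide_distrib diff_divide_distrib)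
  qed
  have GE: "G E > 0" using sig QE unfolding G_def by (simp add: zero_less_mult_iff divide_pos_pos)
  have cG: "isCont G E" unfolding G_def L_def Q_def Q'_def
    using QE unfolding Q_def by (intro continuous_intros) auto
  obtain d where d: "d > 0" "\<And>x. \<bar>x-E\<bar> < d \<Longrightarrow> G x > 0"
  proof -
    have "eventually (\<lambda>x. G x > 0) (at E)"
      using order_tendstoD(1)[OF cG[unfolded isCont_def] GE] .
    then obtain d where "d > 0" "\<And>x. x \<noteq> E \<Longrightarrow> dist x E < d \<Longrightarrow> G x > 0"
      unfolding eventually_at by blast
    then show ?thesis using that GE by (metis dist_real_def)
  qed
  define \<eta> where "\<eta> = min (d/2) (min (E/2) ((1-E)/2))"
  have eta: "\<eta> > 0" "\<eta> < d" "\<eta> < E" "\<eta> < 1 - E" using d E0 unfolding \<eta>_def min_def by auto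
  have inI: "0 < x" "x < 1" "G x > 0" "Q x > 0" if "\<bar>x-E\<bar> \<le> \<eta>" for x
    using that eta d Qpos by auto
  have cphi: "continuous_on {E-\<eta>..E+\<eta>} \<phi>"
  proof (rule DERIV_atLeastAtMost_imp_continuous_on)
    fix x assume "E-\<eta> \<le> x" "x \<le> E+\<eta>"
    then have "\<bar>x-E\<bar> \<le> \<eta>" by auto
    then have "Q x \<noteq> 0" using inI(4)[of x] by simp
    then show "\<exists>y. DERIV \<phi> x :> y" using dphi by blast
  qed
  have inc: "\<phi> x < \<phi> y" if "E \<le> x" "x < y" "y \<le> E+\<eta>" for x y
  proof (rule DERIV_pos_imp_increasing_open[OF \<open>x<y\<close>])
    fix z assume "x < z" "z < y"
    then have "\<bar>z-E\<bar> \<le> \<eta>" "z > E" using that by auto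
    then have "Q z \<noteq> 0" "G z > 0" using inI(3,4)[of z] by auto
    then show "\<exists>y. DERIV \<phi> z :> y \<and> y > 0" using dphi \<open>z > E\<close> by (intro exI[of _ "(z-E)*G z"]) auto
  next
    show "continuous_on {x..y} \<phi>" by (rule continuous_on_subset[OF cphi]) (use that in auto)
  qed
  have dec: "\<phi> y < \<phi> x" if "E-\<eta> \<le> x" "x < y" "y \<le> E" for x y
  proof (rule DERIV_neg_imp_decreasing_open[OF \<open>x<y\<close>])
    fix z assume "x < z" "z < y"
    then have "\<bar>z-E\<bar> \<le> \<eta>" "z < E" using that by auto
    then have "Q z \<noteq> 0" "G z > 0" using inI(3,4)[of z] by auto
    then show "\<exists>y. DERIV \<phi> z :> y \<and> y < 0" using dphi \<open>z < E\<close>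
      by (intro exI[of _ "(z-E)*G z"]) (auto simp: mult_neg_pos)
  next
    show "continuous_on {x..y} \<phi>" by (rule continuous_on_subset[OF cphi]) (use that in auto)
  qed
  have phiE: "\<phi> E = 0" unfolding \<phi>_def by simp
  have pos: "\<phi> x > 0" if "\<bar>x-E\<bar> \<le> \<eta>" "x \<noteq> E" for x
  proof (cases "x < E")
    case True then show ?thesis using dec[of x E] that phiE by auto
  next
    case False then show ?thesis using inc[of E x] that phiE by auto
  qed
  define F where "F = (\<lambda>m. vfield b c k (a_1 k c Ee) m)"
  have char: "F m (x,y) = 0 \<longleftrightarrow> y = (1-x)/c \<and> \<phi> x = \<sigma>*(m-m0)"
    if "\<bar>x-E\<bar> \<le> \<eta>" "y > 0" for x y m
  proof -
    have x: "0 < x" "x < 1" "Q x > 0" using inI that by auto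
    have kx: "1 + k*x \<noteq> 0" using x kc by (smt (verit) mult_pos_pos)
    have F: "F m (x,y) = (b*x*(1-x-c*y), y*(1/(1+k*x) - y - a*x - m*x*y))"
      unfolding F_def vfield_def a_def by simp
    have "F m (x,y) = 0 \<longleftrightarrow> (1-x-c*y = 0 \<and> 1/(1+k*x) - y - a*x - m*x*y = 0)"
      unfolding F using x that assms(1) by (simp add: zero_prod_def)
    also have "\<dots> \<longleftrightarrow> y = (1-x)/c \<and> 1/(1+k*x) - (1-x)/c - a*x - m*x*((1-x)/c) = 0"
    proof -
      have yy: "1-x-c*y = 0 \<longleftrightarrow> y = (1-x)/c" using kc by (auto simp: field_simps)
      show ?thesis unfolding yy by auto
    qed
    also have "\<dots> \<longleftrightarrow> y = (1-x)/c \<and> c*(1+k*x)*(1/(1+k*x) - (1-x)/c - a*x - m*x*((1-x)/c)) = 0"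
      using kc kx by auto
    also have "\<dots> \<longleftrightarrow> y = (1-x)/c \<and> (x-E)^2 * L x - (m-m0)*Q x = 0"
      unfolding a_def key[OF assms(4,2,3) kx] L_def Q_def m0_def E_def ..
    also have "\<dots> \<longleftrightarrow> y = (1-x)/c \<and> \<phi> x = \<sigma>*(m-m0)"
    proof -
      have "(x-E)^2 * L x - (m-m0)*Q x = 0 \<longleftrightarrow> (x-E)^2 * (L x / Q x) = m - m0"
        using x by (auto simp: field_simps)
      also have "\<dots> \<longleftrightarrow> \<phi> x = \<sigma>*(m-m0)" unfolding \<phi>_def by (metis mult_cancel_left sig(4))
      finally show ?thesis by simp
    qed
    finally show ?thesis .
  qed
  define \<kappa> where "\<kappa> = sqrt (1 + 1/c^2)"
  have kap: "\<kappa> \<ge> 1" unfolding \<kappa>_def by simp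
  have dline: "dist (E, y0) (x, (1-x)/c) = \<bar>x-E\<bar> * \<kappa>" for x
  proof -
    have "dist (E, y0) (x, (1-x)/c) = sqrt ((x-E)^2 * (1 + 1/c^2))"
      unfolding dist_Pair_Pair dist_real_def y0_def using kc
      by (simp add: power2_eq_square field_simps)
    also have "\<dots> = \<bar>x-E\<bar> * \<kappa>" unfolding \<kappa>_def real_sqrt_mult by simp
    finally show ?thesis .
  qed
  define \<delta>0 where "\<delta>0 = min \<eta> (y0/2)"
  have d0: "\<delta>0 > 0" "\<delta>0 \<le> \<eta>" "\<delta>0 \<le> y0/2" using eta y0p unfolding \<delta>0_def by auto
  have inball: "\<bar>fst z - E\<bar> < \<delta>" "snd z > 0" if "z \<in> ball (E,y0) \<delta>" "\<delta> \<le> \<delta>0" for z \<delta>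
  proof -
    have "dist (fst z) E < \<delta>" "dist (snd z) y0 < \<delta>"
      using that dist_fst_le[of z "(E,y0)"] dist_snd_le[of z "(E,y0)"] by (auto simp: dist_commute)
    then show "\<bar>fst z - E\<bar> < \<delta>" "snd z > 0" using d0 that by (auto simp: dist_real_def)
  qed
  have setchar: "{z \<in> ball (E,y0) \<delta>. F m z = 0}
      = (\<lambda>x. (x,(1-x)/c)) ` {x. \<bar>x-E\<bar> < \<delta>/\<kappa> \<and> \<phi> x = \<sigma>*(m-m0)}"
    if "0 < \<delta>" "\<delta> \<le> \<delta>0" for \<delta> m
  proof (intro set_eqI iffI)
    fix z assume z: "z \<in> {z \<in> ball (E,y0) \<delta>. F m z = 0}"
    obtain x y where xy: "z = (x,y)" by fastforce
    have b: "\<bar>x-E\<bar> < \<delta>" "y > 0" using inball[of z \<delta>] z that xy by auto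
    then have e: "y = (1-x)/c" "\<phi> x = \<sigma>*(m-m0)" using char[of x y m] z xy d0 that by auto
    have "\<bar>x-E\<bar> * \<kappa> < \<delta>" using z xy e dline[of x] by (simp add: dist_commute)
    then have "\<bar>x-E\<bar> < \<delta>/\<kappa>" using kap by (simp add: field_simps)
    then show "z \<in> (\<lambda>x. (x,(1-x)/c)) ` {x. \<bar>x-E\<bar> < \<delta>/\<kappa> \<and> \<phi> x = \<sigma>*(m-m0)}"
      using xy e by auto
  next
    fix z assume "z \<in> (\<lambda>x. (x,(1-x)/c)) ` {x. \<bar>x-E\<bar> < \<delta>/\<kappa> \<and> \<phi> x = \<sigma>*(m-m0)}"
    then obtain x where x: "z = (x,(1-x)/c)" "\<bar>x-E\<bar> < \<delta>/\<kappa>" "\<phi> x = \<sigma>*(m-m0)" by auto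
    have "\<bar>x-E\<bar> * \<kappa> < \<delta>" using x kap by (simp add: field_simps)
    then have inb: "z \<in> ball (E,y0) \<delta>" using x dline[of x] by simp
    have "\<delta>/\<kappa> \<le> \<delta>" using kap that by (simp add: field_simps)
    then have xe: "\<bar>x-E\<bar> \<le> \<eta>" using x d0 that by auto
    then have "(1-x)/c > 0" using inI kc by auto
    then have "F m z = 0" using char[OF xe] x by auto
    then show "z \<in> {z \<in> ball (E,y0) \<delta>. F m z = 0}" using inb by auto
  qed
  have eq0: "F m0 (E,y0) = 0" using char[of E y0 m0] y0p phiE eta unfolding y0_def by simp
  have uniq: "\<forall>p\<in>ball (E,y0) \<delta>0. F m0 p = 0 \<longrightarrow> p = (E,y0)"
  proof (intro ballI impI)
    fix p assume p: "p \<in> ball (E,y0) \<delta>0" "F m0 p = 0"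
    obtain x y where xy: "p = (x,y)" by fastforce
    have b: "\<bar>x-E\<bar> < \<delta>0" "y > 0" using inball[of p \<delta>0] p xy by auto
    then have xe: "\<bar>x-E\<bar> \<le> \<eta>" using d0 by auto
    then have e: "y = (1-x)/c" "\<phi> x = 0" using char[of x y m0] p xy b by auto
    then have "x = E" using pos[OF xe] by force
    then show "p = (E,y0)" using xy e unfolding y0_def by simp
  qed
  have der: "\<exists>D. (F m0 has_derivative D) (at (E,y0)) \<and> (\<exists>v. v \<noteq> 0 \<and> D v = 0) \<and> (\<exists>w. D (D w) \<noteq> 0)"
  proof -
    define gx where "gx = -k/(1+k*E)^2 - a - m0*y0"
    have kE: "1 + k*E \<noteq> 0" using kc E0 by (smt (verit) mult_pos_pos)
    have e1: "1 - E - c*y0 = 0" unfolding y0_def using kc by simp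
    have g0: "1/(1+k*E) - y0 - a*E - m0*E*y0 = 0"
    proof -
      have "F m0 (E,y0) = (b*E*(1-E-c*y0), y0*(1/(1+k*E) - y0 - a*E - m0*E*y0))"
        unfolding F_def vfield_def a_def by simp
      then show ?thesis using eq0 y0p by (simp add: zero_prod_def)
    qed
    have gxr: "c*gx + 1 + m0*E = 0" using gx_lemma[OF assms(4,2,3)] unfolding gx_def a_def m0_def y0_def E_def .
    define D where "D = (\<lambda>h::real\<times>real. (-b*E*fst h - b*c*E * snd h,
           y0*gx*fst h - y0*(1+m0*E) * snd h))"
    have hd: "(F m0 has_derivative D) (at (E,y0))"
      unfolding F_def D_def gx_def a_def[symmetric] by (rule vder[OF kE e1 g0])
    have "D (c, -1) = (0, y0*(c*gx + 1 + m0*E))" unfolding D_def by (simp add: algebra_simps)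
    then have v1: "D (c, -1) = 0" using gxr by (simp add: zero_prod_def)
    have v2: "(c,-1::real) \<noteq> 0" by (simp add: zero_prod_def)
    have fD: "fst (D (D (1,0))) = b*E*(b*E + y0*(1+m0*E))"
    proof -
      have "fst (D (D (1,0))) = b*E*(b*E) - b*E*(c*gx)*y0" unfolding D_def by (simp add: algebra_simps)
      also have "c*gx = -(1+m0*E)" using gxr by simp
      finally show ?thesis by (simp add: algebra_simps)
    qed
    have "b*E*(b*E + y0*(1+m0*E)) > 0" using assms(1) E0 y0p m0p
      by (intro mult_pos_pos add_pos_pos) auto
    then have "D (D (1,0)) \<noteq> 0" using fD by (metis fst_zero order_less_irrefl)
    then show ?thesis using hd v1 v2 by blast
  qed
  have bif: "\<exists>\<sigma>\<in>{-1, 1::real}. \<forall>\<delta>. 0 < \<delta> \<and> \<delta> \<le> \<delta>0 \<longrightarrow>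
           (\<exists>\<epsilon>>0. \<forall>m.
              (0 < \<sigma> * (m - m0) \<and> \<sigma> * (m - m0) < \<epsilon> \<longrightarrow>
                 (\<exists>p q. p \<noteq> q \<and> {z \<in> ball (E,y0) \<delta>. F m z = 0} = {p, q})) \<and>
              (0 < \<sigma> * (m0 - m) \<and> \<sigma> * (m0 - m) < \<epsilon> \<longrightarrow>
                 {z \<in> ball (E,y0) \<delta>. F m z = 0} = {}))"
  proof (intro bexI[of _ \<sigma>] allI impI)
    show "\<sigma> \<in> {-1,1}" using sig by simp
    fix \<delta> :: real assume dl: "0 < \<delta> \<and> \<delta> \<le> \<delta>0"
    have rho: "0 < \<delta>/\<kappa>" "\<delta>/\<kappa> \<le> \<eta>"
      using dl kap d0 by (auto simp: field_simps) (smt (verit) mult_le_cancel_left1)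
    obtain \<epsilon> where ep: "\<epsilon> > 0" and H: "\<And>\<nu>. (0 < \<nu> \<and> \<nu> < \<epsilon> \<longrightarrow> (\<exists>p q. p \<noteq> q \<and> {x. \<bar>x-E\<bar> < \<delta>/\<kappa> \<and> \<phi> x = \<nu>} = {p,q}))
        \<and> (\<nu> < 0 \<longrightarrow> {x. \<bar>x-E\<bar> < \<delta>/\<kappa> \<and> \<phi> x = \<nu>} = {})"
      using oneD[OF rho cphi dec inc phiE] by blast
    show "\<exists>\<epsilon>>0. \<forall>m.
              (0 < \<sigma> * (m - m0) \<and> \<sigma> * (m - m0) < \<epsilon> \<longrightarrow>
                 (\<exists>p q. p \<noteq> q \<and> {z \<in> ball (E,y0) \<delta>. F m z = 0} = {p, q})) \<and>
              (0 < \<sigma> * (m0 - m) \<and> \<sigma> * (m0 - m) < \<epsilon> \<longrightarrow>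
                 {z \<in> ball (E,y0) \<delta>. F m z = 0} = {})"
    proof (intro exI[of _ \<epsilon>] conjI allI impI ep)
      fix m assume m: "0 < \<sigma> * (m - m0) \<and> \<sigma> * (m - m0) < \<epsilon>"
      then obtain p q where pq: "p \<noteq> q" "{x. \<bar>x-E\<bar> < \<delta>/\<kappa> \<and> \<phi> x = \<sigma> * (m - m0)} = {p,q}"
        using H[of "\<sigma> * (m - m0)"] by blast
      show "\<exists>p q. p \<noteq> q \<and> {z \<in> ball (E,y0) \<delta>. F m z = 0} = {p, q}"
      proof (intro exI conjI)
        have "{z \<in> ball (E,y0) \<delta>. F m z = 0} = (\<lambda>x. (x,(1-x)/c)) ` {p,q}"
          using setchar[of \<delta> m] dl pq(2) by simp
        then show "{z \<in> ball (E,y0) \<delta>. F m z = 0} = {(p,(1-p)/c), (q,(1-q)/c)}" by simp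
        show "(p,(1-p)/c) \<noteq> (q,(1-q)/c)" using pq(1) by simp
      qed
    next
      fix m assume m: "0 < \<sigma> * (m0 - m) \<and> \<sigma> * (m0 - m) < \<epsilon>"
      then have "\<sigma> * (m - m0) < 0" by (simp add: algebra_simps)
      then show "{z \<in> ball (E,y0) \<delta>. F m z = 0} = {}"
        using H[of "\<sigma> * (m - m0)"] setchar[of \<delta> m] dl by auto
    qed
  qed
  have "saddle_node_bifurcation F m0 (E,y0)"
    unfolding saddle_node_bifurcation_def
    by (intro conjI eq0 der exI[of _ \<delta>0] d0(1) uniq bif)
  then show ?thesis unfolding F_def m0_def E_def y0_def .
qed

end
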